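(* For all integers $q \ge d \ge 2$, $B(q,d,2) = \left\lceil \frac{q-1}{d-1}\right\rceil$; that is, for every $f:\binom{[q]}{d}\to\{0,1\}$ there are $b=\lceil \frac{q-1}{d-1}\rceil$ sets $S_1,\dots,S_b\in\binom{[q]}{d}$ with $S_1\cup\dots\cup S_b=[q]$ on which $f$ is constant, and this number cannot be decreased in general.
   Context: $\binom{[q]}{d}$ denotes the family of $d$-element subsets of $[q]=\{1,\dots,q\}$. A function $f:\binom{[q]}{d}\to[c]$ has a $t$-cover if there exist $S_1,\dots,S_t\in\binom{[q]}{d}$ (not necessarily distinct) with $S_1\cup\dots\cup S_t=[q]$ and $f(S_1)=\dots=f(S_t)$. $B(q,d,c)$ is the minimum $t$ such that every $f:\binom{[q]}{d}\to[c]$ has a $t$-cover. *)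

theory Defs
  imports Complex_Main
begin

definition ksubsets :: "nat \<Rightarrow> nat \<Rightarrow> nat set set" where
  "ksubsets q d = {S. S \<subseteq> {1..q} \<and> card S = d}"

(* f has a t-cover: S_1..S_t (indexed 0..t-1, not necessarily distinct) in \binom{[q]}{d}
   covering [q] with f constant on them *)
definition has_t_cover :: "nat \<Rightarrow> nat \<Rightarrow> (nat set \<Rightarrow> nat) \<Rightarrow> nat \<Rightarrow> bool" where
  "has_t_cover q d f t \<longleftrightarrow>
     (\<exists>S :: nat \<Rightarrow> nat set.
        (\<forall>i<t. S i \<in> ksubsets q d) \<and>
        (\<Union>i<t. S i) = {1..q} \<and>
        (\<forall>i<t. \<forall>j<t. f (S i) = f (S j)))"

(* B(q,d,c): least t such that every f : \binom{[q]}{d} \<rightarrow> [c] has a t-cover.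
   Only the values of f on \binom{[q]}{d} matter. *)
definition B :: "nat \<Rightarrow> nat \<Rightarrow> nat \<Rightarrow> nat" where
  "B q d c = (LEAST t. \<forall>f :: nat set \<Rightarrow> nat.
                 (\<forall>S\<in>ksubsets q d. f S \<in> {1..c}) \<longrightarrow> has_t_cover q d f t)"

end

theory Submission
  imports Defs
begin

lemma extend_set:
  assumes "finite U" "Y \<subseteq> U" "card Y \<le> d" "d \<le> card U"
  shows "\<exists>T. Y \<subseteq> T \<and> T \<subseteq> U \<and> card T = d"
proof -
  have "d - card Y \<le> card (U - Y)"
    using assms by (simp add: card_Diff_subset finite_subset)
  then obtain T' where T': "T' \<subseteq> U - Y" "card T' = d - card Y" "finite T'"
    by (rule obtain_subset_with_card_n)
  have "card (Y \<union> T') = card Y + card T'"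
    using T' assms by (intro card_Un_disjoint) (auto intro: finite_subset)
  then show ?thesis using T' assms by (intro exI[of _ "Y \<union> T'"]) auto
qed

lemma swap_lemma:
  fixes f :: "nat set \<Rightarrow> nat"
  shows "\<And>A. finite A \<Longrightarrow> finite Q \<Longrightarrow> card A = d \<Longrightarrow> card Q = d \<Longrightarrow> f A \<noteq> f Q \<Longrightarrow>
    n = card (A - Q) \<Longrightarrow>
    \<exists>Z y1 y2. Z \<subseteq> A \<union> Q \<and> y1 \<in> A \<union> Q \<and> y2 \<in> A \<union> Q \<and> y1 \<notin> Z \<and> y2 \<notin> Z
      \<and> card Z = d - 1 \<and> f (insert y1 Z) \<noteq> f (insert y2 Z)"
proof (induction n rule: less_induct)
  case (less n A)
  have "A - Q \<noteq> {}"
  proof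
    assume "A - Q = {}"
    then have "A \<subseteq> Q" by blast
    then have "A = Q" using less.prems card_subset_eq[of Q A] by simp
    then show False using less.prems by simp
  qed
  then obtain a where a: "a \<in> A" "a \<notin> Q" by blast
  have cAB: "card (A - Q) = card (Q - A)"
    using less.prems by (simp add: card_Diff_subset_Int Int_commute)
  have "card (Q - A) > 0" using cAB \<open>A - Q \<noteq> {}\<close> less.prems by auto
  then have "Q - A \<noteq> {}" by (metis card.empty less_irrefl)
  then obtain b where b: "b \<in> Q" "b \<notin> A" by blast
  define C where "C = insert b (A - {a})"
  have cardA: "card (A - {a}) = d - 1" using a less.prems by simp
  have "d \<ge> 1" using a less.prems card_gt_0_iff[of A] by auto
  then have cardC: "card C = d" unfolding C_def using a b less.prems cardA
    by (simp add: card_insert_if)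
  show ?case
  proof (cases "f C = f A")
    case False
    have "insert a (A - {a}) = A" using a by blast
    then have ne: "f (insert b (A - {a})) \<noteq> f (insert a (A - {a}))"
      using False unfolding C_def by simp
    have s1: "A - {a} \<subseteq> A \<union> Q" "b \<in> A \<union> Q" "a \<in> A \<union> Q" "b \<notin> A - {a}" "a \<notin> A - {a}"
      using a b by auto
    show ?thesis
      by (rule exI[of _ "A - {a}"], rule exI[of _ b], rule exI[of _ a]) (intro conjI s1 cardA ne)
  next
    case True
    have "C - Q = (A - Q) - {a}" unfolding C_def using a b by blast
    moreover have "card ((A - Q) - {a}) < card (A - Q)"
      using a less.prems by (intro card_Diff1_less) auto
    ultimately have "card (C - Q) < n" using less.prems by simp
    moreover have "finite C" unfolding C_def using less.prems by simp
    ultimately obtain Z y1 y2 where "Z \<subseteq> C \<union> Q \<and> y1 \<in> C \<union> Q \<and> y2 \<in> C \<union> Q \<and> y1 \<notin> Z \<and> y2 \<notin> Z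
      \<and> card Z = d - 1 \<and> f (insert y1 Z) \<noteq> f (insert y2 Z)"
      using less.IH[OF \<open>card (C - Q) < n\<close> \<open>finite C\<close> less.prems(2) cardC less.prems(4) _ refl] True less.prems(5) by metis
    moreover have "C \<union> Q \<subseteq> A \<union> Q" unfolding C_def using b by blast
    ultimately show ?thesis by blast
  qed
qed


lemma cover_gen:
  fixes f :: "nat set \<Rightarrow> nat" and d :: nat
  assumes d2: "2 \<le> d"
  shows "\<And>U Y m. finite U \<Longrightarrow> Y \<subseteq> U \<Longrightarrow> d \<le> card U \<Longrightarrow> 1 \<le> m \<Longrightarrow> card Y \<le> m * (d - 1) + 1 \<Longrightarrow>
    (\<forall>S. S \<subseteq> U \<longrightarrow> card S = d \<longrightarrow> f S \<in> {1,2}) \<Longrightarrow> n = card Y \<Longrightarrow>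
    \<exists>S c. (\<forall>i<m. S i \<subseteq> U \<and> card (S i) = d \<and> f (S i) = c) \<and> Y \<subseteq> (\<Union>i<m. S i)"
proof (induction n rule: less_induct)
  case (less n U Y m)
  note fU = less.prems(1) and YU = less.prems(2) and dU = less.prems(3) and m1 = less.prems(4)
    and cY = less.prems(5) and col = less.prems(6) and nY = less.prems(7)
  have finY: "finite Y" using fU YU finite_subset by blast
  show ?case
  proof (cases "card Y \<le> d")
    case True
    then obtain T where T: "Y \<subseteq> T" "T \<subseteq> U" "card T = d" using extend_set[OF fU YU True dU] by blast
    have P1: "\<forall>i<m. (\<lambda>i. T) i \<subseteq> U \<and> card ((\<lambda>i. T) i) = d \<and> f ((\<lambda>i. T) i) = f T" using T by simp
    have "0 \<in> {..<m}" using m1 by simp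
    then have P2: "Y \<subseteq> (\<Union>i<m. (\<lambda>i. T) i)" using T(1) UN_upper[of 0 "{..<m}" "\<lambda>i. T"] by simp
    show ?thesis
      by (rule exI[of _ "\<lambda>i. T"], rule exI[of _ "f T"]) (use P1 P2 in simp)
  next
    case False
    then have cYd: "card Y \<ge> d + 1" by simp
    obtain m' where mm: "m = Suc m'" using m1 by (cases m) auto
    have m'1: "1 \<le> m'"
    proof (rule ccontr)
      assume "\<not> 1 \<le> m'"
      then have "m' = 0" by simp
      then show False using cY cYd mm d2 by simp
    qed
    have key: "\<exists>Z y1 y2. Z \<subseteq> Y \<and> y1 \<in> Y \<and> y2 \<in> Y \<and> y1 \<notin> Z \<and> y2 \<notin> Z \<and> card Z = d - 1 \<and>
       (\<forall>T. T \<subseteq> Y \<longrightarrow> card T = d \<longrightarrow> f T = f (insert y1 Z) \<or> f T = f (insert y2 Z))"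
    proof (cases "\<exists>T1 T2. T1 \<subseteq> Y \<and> T2 \<subseteq> Y \<and> card T1 = d \<and> card T2 = d \<and> f T1 \<noteq> f T2")
      case True
      then obtain T1 T2 where T: "T1 \<subseteq> Y" "T2 \<subseteq> Y" "card T1 = d" "card T2 = d" "f T1 \<noteq> f T2" by blast
      have fT: "finite T1" "finite T2" using T finY finite_subset by auto
      from swap_lemma[OF fT T(3,4) T(5) refl] obtain Z y1 y2 where Z: "Z \<subseteq> T1 \<union> T2" "y1 \<in> T1 \<union> T2"
        "y2 \<in> T1 \<union> T2" "y1 \<notin> Z" "y2 \<notin> Z" "card Z = d - 1" "f (insert y1 Z) \<noteq> f (insert y2 Z)"
        by blast
      have finZ: "finite Z" using Z(1) fT by (meson finite_UnI finite_subset)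
      have c1: "card (insert y1 Z) = d" using Z finZ d2 by simp
      have c2: "card (insert y2 Z) = d" using Z finZ d2 by simp
      have sub: "Z \<subseteq> Y" "y1 \<in> Y" "y2 \<in> Y" using Z T by auto
      have "insert y1 Z \<subseteq> U" "insert y2 Z \<subseteq> U" using sub YU by auto
      then have "f (insert y1 Z) \<in> {1,2}" "f (insert y2 Z) \<in> {1,2}" using col c1 c2 by auto
      moreover have "\<forall>T. T \<subseteq> Y \<longrightarrow> card T = d \<longrightarrow> f T \<in> {1,2}" using col YU by auto
      ultimately have "\<forall>T. T \<subseteq> Y \<longrightarrow> card T = d \<longrightarrow> f T = f (insert y1 Z) \<or> f T = f (insert y2 Z)"
        using Z(7) by auto
      then show ?thesis using sub Z(4,5,6) by blast
    next
      case False
      have "d - 1 \<le> card Y" using cYd by simp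
      then obtain Z where Z: "Z \<subseteq> Y" "card Z = d - 1" "finite Z" by (rule obtain_subset_with_card_n)
      have "card Z < card Y" using Z cYd by simp
      then have "\<not> Y \<subseteq> Z" using Z finY by (meson card_mono leD)
      then obtain y where y: "y \<in> Y" "y \<notin> Z" by blast
      have "card (insert y Z) = d" using Z y d2 by simp
      moreover have "insert y Z \<subseteq> Y" using Z y by simp
      ultimately have "\<forall>T. T \<subseteq> Y \<longrightarrow> card T = d \<longrightarrow> f T = f (insert y Z)" using False by blast
      then show ?thesis using Z y by blast
    qed
    then obtain Z y1 y2 where Z: "Z \<subseteq> Y" "y1 \<in> Y" "y2 \<in> Y" "y1 \<notin> Z" "y2 \<notin> Z" "card Z = d - 1"
       "\<forall>T. T \<subseteq> Y \<longrightarrow> card T = d \<longrightarrow> f T = f (insert y1 Z) \<or> f T = f (insert y2 Z)"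
      by blast
    have finZ: "finite Z" using Z(1) finY finite_subset by blast
    define Y' where "Y' = Y - Z"
    have cY': "card Y' = card Y - (d - 1)" using Z finZ unfolding Y'_def by (simp add: card_Diff_subset)
    have lt: "card Y' < n" using cY' nY cYd d2 by simp
    have "m * (d - 1) = (d - 1) + m' * (d - 1)" using mm by simp
    then have cY'm: "card Y' \<le> m' * (d - 1) + 1" using cY' cY by linarith
    have colY: "\<forall>S. S \<subseteq> Y \<longrightarrow> card S = d \<longrightarrow> f S \<in> {1,2}" using col YU by blast
    have Y'Y: "Y' \<subseteq> Y" unfolding Y'_def by blast
    have dY: "d \<le> card Y" using cYd by simp
    from less.IH[OF lt finY Y'Y dY m'1 cY'm colY refl] obtain S c where
      S: "\<forall>i<m'. S i \<subseteq> Y \<and> card (S i) = d \<and> f (S i) = c" "Y' \<subseteq> (\<Union>i<m'. S i)" by blast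
    have "S 0 \<subseteq> Y \<and> card (S 0) = d \<and> f (S 0) = c" using S(1) m'1 by simp
    then have "c = f (insert y1 Z) \<or> c = f (insert y2 Z)" using Z(7) by metis
    then obtain y where y: "y \<in> Y" "y \<notin> Z" "f (insert y Z) = c" using Z by blast
    define S' where "S' = S(m' := insert y Z)"
    have cyz: "card (insert y Z) = d" using y finZ Z(6) d2 by simp
    have P1: "\<forall>i<m. S' i \<subseteq> U \<and> card (S' i) = d \<and> f (S' i) = c"
    proof (intro allI impI)
      fix i assume "i < m"
      show "S' i \<subseteq> U \<and> card (S' i) = d \<and> f (S' i) = c"
      proof (cases "i = m'")
        case True
        then show ?thesis using y Z(1) YU cyz unfolding S'_def by auto
      next
        case False
        then have "i < m'" using \<open>i < m\<close> mm by simp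
        then have "S i \<subseteq> Y \<and> card (S i) = d \<and> f (S i) = c" using S(1) by blast
        then show ?thesis using YU False unfolding S'_def by auto
      qed
    qed
    have P2: "Y \<subseteq> (\<Union>i<m. S' i)"
    proof
      fix x assume "x \<in> Y"
      show "x \<in> (\<Union>i<m. S' i)"
      proof (cases "x \<in> Z")
        case True
        then have "x \<in> S' m'" unfolding S'_def by simp
        then show ?thesis using mm by blast
      next
        case False
        then have "x \<in> Y'" using \<open>x \<in> Y\<close> Y'_def by simp
        then obtain i where i: "i < m'" "x \<in> S i" using S(2) by blast
        then have "x \<in> S' i" unfolding S'_def by simp
        moreover have "i < m" using i mm by simp
        ultimately show ?thesis by blast
      qed
    qed
    show ?thesis
      by (rule exI[of _ S'], rule exI[of _ c]) (use P1 P2 in simp)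
  qed
qed


theorem lemmaA1:
  fixes q d :: nat
  assumes "2 \<le> d" and "d \<le> q"
  shows "int (B q d 2) = ceiling (real (q - 1) / real (d - 1))"
proof -
  define x where "x = real (q - 1) / real (d - 1)"
  define b where "b = nat \<lceil>x\<rceil>"
  have dpos: "real (d - 1) > 0" using assms by simp
  have xpos: "x > 0" using assms unfolding x_def by simp
  have bint: "int b = \<lceil>x\<rceil>" unfolding b_def using xpos by simp
  have rb: "real b = of_int \<lceil>x\<rceil>" using bint by (metis of_int_of_nat_eq)
  have b1: "x \<le> real b" using rb by simp
  have b2: "real b - 1 < x" using rb ceiling_correct[of x] by simp
  have "real (q - 1) \<le> real b * real (d - 1)"
    using b1 dpos unfolding x_def by (simp add: pos_divide_le_eq)
  then have up: "q - 1 \<le> b * (d - 1)" by (metis of_nat_le_iff of_nat_mult)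
  have low: "t * (d - 1) < q - 1" if "t < b" for t
  proof -
    have "real t \<le> real b - 1" using that by simp
    then have "real t < x" using b2 by simp
    then have "real t * real (d - 1) < real (q - 1)"
      using dpos unfolding x_def by (simp add: pos_less_divide_eq)
    then show ?thesis by (metis of_nat_less_iff of_nat_mult)
  qed
  have b1n: "1 \<le> b"
  proof (rule ccontr)
    assume "\<not> 1 \<le> b"
    then have "b = 0" by simp
    then show False using up assms by simp
  qed
  have d12: "{1..2::nat} = {1,2}" by auto
  have cover: "\<forall>f :: nat set \<Rightarrow> nat. (\<forall>S\<in>ksubsets q d. f S \<in> {1..2}) \<longrightarrow> has_t_cover q d f b"
  proof (intro allI impI)
    fix f :: "nat set \<Rightarrow> nat"
    assume hf: "\<forall>S\<in>ksubsets q d. f S \<in> {1..2}"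
    have col: "\<forall>S. S \<subseteq> {1..q} \<longrightarrow> card S = d \<longrightarrow> f S \<in> {1,2}"
      using hf d12 unfolding ksubsets_def by auto
    have cq: "card {1..q} \<le> b * (d - 1) + 1" using up by simp
    have dq: "d \<le> card {1..q}" using assms by simp
    obtain S c where S: "\<forall>i<b. S i \<subseteq> {1..q} \<and> card (S i) = d \<and> f (S i) = c"
      "{1..q} \<subseteq> (\<Union>i<b. S i)"
      using cover_gen[OF assms(1) finite_atLeastAtMost order_refl dq b1n cq col refl] by blast
    have "(\<Union>i<b. S i) = {1..q}" using S by blast
    moreover have "\<forall>i<b. S i \<in> ksubsets q d" using S(1) unfolding ksubsets_def by blast
    moreover have "\<forall>i<b. \<forall>j<b. f (S i) = f (S j)" using S(1) by simp
    ultimately show "has_t_cover q d f b" unfolding has_t_cover_def by blast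
  qed
  have nocover: "\<not> (\<forall>f :: nat set \<Rightarrow> nat. (\<forall>S\<in>ksubsets q d. f S \<in> {1..2}) \<longrightarrow> has_t_cover q d f t)"
    if "t < b" for t
  proof
    assume H: "\<forall>f :: nat set \<Rightarrow> nat. (\<forall>S\<in>ksubsets q d. f S \<in> {1..2}) \<longrightarrow> has_t_cover q d f t"
    define f0 :: "nat set \<Rightarrow> nat" where "f0 = (\<lambda>S. if 1 \<in> S then 1 else 2)"
    have f0a: "f0 X = 1" if "1 \<in> X" for X unfolding f0_def using that by simp
    have f0b: "f0 X = 2" if "1 \<notin> X" for X unfolding f0_def using that by simp
    have "f0 X \<in> {1..2}" for X by (cases "1 \<in> X") (simp_all add: f0a f0b)
    then have "\<forall>S\<in>ksubsets q d. f0 S \<in> {1..2}" by blast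
    then have "has_t_cover q d f0 t" using mp[OF spec[OF H, of f0]] by simp
    then obtain S where SS: "(\<forall>i<t. S i \<in> ksubsets q d) \<and> (\<Union>i<t. S i) = {1..q} \<and>
      (\<forall>i<t. \<forall>j<t. f0 (S i) = f0 (S j))" unfolding has_t_cover_def by blast
    note S = conjunct1[OF SS] conjunct1[OF conjunct2[OF SS]] conjunct2[OF conjunct2[OF SS]]
    have "1 \<in> {1..q}" using assms by simp
    then have "1 \<in> (\<Union>i<t. S i)" using S(2) by simp
    then obtain i0 where i0: "i0 < t" "1 \<in> S i0" by blast
    have all1: "1 \<in> S i" if "i < t" for i
    proof -
      have e: "f0 (S i) = f0 (S i0)" using S(3)[rule_format, OF that i0(1)] .
      show ?thesis
      proof (rule ccontr)
        assume "1 \<notin> S i"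
        then have "f0 (S i) = 2" by (rule f0b)
        moreover have "f0 (S i0) = 1" using i0(2) by (rule f0a)
        ultimately show False using e by simp
      qed
    qed
    have cardS: "card (S i - {1}) = d - 1" if "i < t" for i
    proof -
      have "card (S i) = d" using S(1) that unfolding ksubsets_def by blast
      moreover have "finite (S i)"
      proof -
        have "S i \<subseteq> {1..q}" using S(1) that unfolding ksubsets_def by blast
        then show ?thesis by (rule finite_subset) simp
      qed
      ultimately show ?thesis using all1[OF that] by simp
    qed
    define W where "W = (\<Union>i<t. S i - {1})"
    have sub: "{1..q} \<subseteq> insert 1 W"
    proof
      fix x assume "x \<in> {1..q}"
      then have "x \<in> (\<Union>i<t. S i)" using S(2) by simp
      then obtain i where "i < t" "x \<in> S i" by blast
      then show "x \<in> insert 1 W" unfolding W_def by blast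
    qed
    have "card W \<le> (\<Sum>i<t. card (S i - {1}))" unfolding W_def by (rule card_UN_le) simp
    also have "\<dots> = (\<Sum>i<t. d - 1)" using cardS by (intro sum.cong) auto
    also have "\<dots> = t * (d - 1)" by simp
    finally have c1: "card W \<le> t * (d - 1)" .
    have "W \<subseteq> (\<Union>i<t. S i)" unfolding W_def by blast
    then have "W \<subseteq> {1..q}" using S(2) by simp
    then have fin: "finite W" by (rule finite_subset) simp
    then have fin2: "finite (insert 1 W)" by simp
    have "q = card {1..q}" by simp
    also have "\<dots> \<le> card (insert 1 W)"
      by (rule card_mono[OF fin2 sub])
    also have "\<dots> \<le> Suc (card W)" using fin by (simp add: card_insert_if)
    finally have "q \<le> Suc (t * (d - 1))" using c1 by linarith
    then show False using low[OF that] assms by simp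
  qed
  have "B q d 2 = b" unfolding B_def
  proof (rule Least_equality)
    show "\<forall>f :: nat set \<Rightarrow> nat. (\<forall>S\<in>ksubsets q d. f S \<in> {1..2}) \<longrightarrow> has_t_cover q d f b"
      by (rule cover)
  next
    fix y assume "\<forall>f :: nat set \<Rightarrow> nat. (\<forall>S\<in>ksubsets q d. f S \<in> {1..2}) \<longrightarrow> has_t_cover q d f y"
    then show "b \<le> y"
    proof -
      assume Hy: "\<forall>f :: nat set \<Rightarrow> nat. (\<forall>S\<in>ksubsets q d. f S \<in> {1..2}) \<longrightarrow> has_t_cover q d f y"
      show "b \<le> y"
      proof (rule ccontr)
        assume "\<not> b \<le> y"
        then have "y < b" by simp
        from nocover[OF this] Hy show False by blast
      qed
    qed
  qed
  then show ?thesis using bint unfolding x_def by simp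
qed

end
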